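(* Let $w$ and $t$ be positive integers with $t\ge 2$, and let $u=\lfloor (\frac{t}{2}+1)^2\rfloor$. Then there exists a constant $c>0$, depending only on $w$ and $t$, such that for every sufficiently large integer $v$ there exists a $t$-IPPS$(w,v)$ of size at least $c\,v^{\frac{w}{u-1}}$; that is, $I_t(w,v)\ge c\,v^{\frac{w}{u-1}}$.
   Context: A $(w,v)$ set system is a pair $(\mathcal{X},\mathcal{B})$ with $|\mathcal{X}|=v$ and $\mathcal{B}\subseteq\binom{\mathcal{X}}{w}$, where $\binom{\mathcal{X}}{w}$ denotes the family of all $w$-element subsets of $\mathcal{X}$; elements of $\mathcal{B}$ are called blocks. For a $w$-subset $T\subseteq\mathcal{X}$ let $P_t(T)=\{\mathcal{P}\subseteq\mathcal{B}: |\mathcal{P}|\le t,\ T\subseteq\bigcup_{B\in\mathcal{P}}B\}$. A $(w,v)$ set system is a $t$-parent-identifying set system, written $t$-IPPS$(w,v)$, if for every $w$-subset $T\subseteq\mathcal{X}$, either $P_t(T)$ is empty or $\bigcap_{\mathcal{P}\in P_t(T)}\mathcal{P}\neq\emptyset$. The size of a $t$-IPPS$(w,v)$ is $|\mathcal{B}|$, and $I_t(w,v)$ denotes the maximum size of a $t$-IPPS$(w,v)$. *)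

theory Defs
  imports Complex_Main
begin

definition Pt :: "nat \<Rightarrow> 'a set set \<Rightarrow> 'a set \<Rightarrow> 'a set set set" where
  "Pt t \<B> T = {\<P>. \<P> \<subseteq> \<B> \<and> card \<P> \<le> t \<and> T \<subseteq> \<Union>\<P>}"

definition set_system :: "nat \<Rightarrow> nat \<Rightarrow> 'a set \<Rightarrow> 'a set set \<Rightarrow> bool" where
  "set_system w v X \<B> \<longleftrightarrow> finite X \<and> card X = v \<and>
     \<B> \<subseteq> {B. B \<subseteq> X \<and> card B = w}"

definition IPPS :: "nat \<Rightarrow> nat \<Rightarrow> nat \<Rightarrow> 'a set \<Rightarrow> 'a set set \<Rightarrow> bool" where
  "IPPS t w v X \<B> \<longleftrightarrow> set_system w v X \<B> \<and>
     (\<forall>T. T \<subseteq> X \<and> card T = w \<longrightarrow>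
        Pt t \<B> T = {} \<or> \<Inter>(Pt t \<B> T) \<noteq> {})"

end

theory Submission
  imports Defs
begin


lemma min_family:
  fixes C :: "'b set set"
  assumes fin: "finite C" and e: "\<Inter>C = {}" and sz: "\<forall>Q\<in>C. finite Q \<and> card Q \<le> t"
  shows "\<exists>Q\<subseteq>C. Q \<noteq> {} \<and> \<Inter>Q = {} \<and> card (\<Union>Q) \<le> card Q * (t + 2 - card Q)"
proof -
  define P where "P = (\<lambda>Q. Q \<subseteq> C \<and> \<Inter>Q = {})"
  have "P C" by (simp add: P_def e)
  then obtain Q where PQ: "P Q" and minQ: "\<forall>Q'. P Q' \<longrightarrow> card Q \<le> card Q'"
    using ex_has_least_nat[of P C card] by blast
  have QC: "Q \<subseteq> C" and Qe: "\<Inter>Q = {}" using PQ P_def by auto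
  have finQ: "finite Q" using QC fin finite_subset by blast
  have Qne: "Q \<noteq> {}" using Qe by auto
  have ex: "\<forall>q\<in>Q. \<exists>x. x \<in> \<Inter>(Q - {q}) \<and> x \<notin> q"
  proof
    fix q assume q: "q \<in> Q"
    have "card (Q - {q}) < card Q" using q finQ by (meson card_Diff1_less)
    hence "\<not> P (Q - {q})" using minQ by fastforce
    hence "\<Inter>(Q - {q}) \<noteq> {}" using QC unfolding P_def by auto
    then obtain x where x: "x \<in> \<Inter>(Q - {q})" by blast
    have "x \<notin> q"
    proof
      assume "x \<in> q" hence "x \<in> \<Inter>Q" using x q by blast
      thus False using Qe by blast
    qed
    thus "\<exists>x. x \<in> \<Inter>(Q - {q}) \<and> x \<notin> q" using x by blast
  qed
  then obtain f where f: "\<forall>q\<in>Q. f q \<in> \<Inter>(Q - {q}) \<and> f q \<notin> q" by metis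
  have inj: "inj_on f Q"
  proof (rule inj_onI)
    fix a b assume a: "a \<in> Q" and b: "b \<in> Q" and ab: "f a = f b"
    show "a = b"
    proof (rule ccontr)
      assume "a \<noteq> b"
      hence "f a \<in> b" using f a b by blast
      thus False using f b ab by auto
    qed
  qed
  define X where "X = f ` Q"
  have finX: "finite X" using finQ X_def by simp
  have cX: "card X = card Q" using inj by (simp add: X_def card_image)
  have sub: "\<forall>q\<in>Q. X - {f q} \<subseteq> q" using f by (auto simp: X_def)
  have cq: "card (q - X) + (card Q - 1) \<le> t" if q: "q \<in> Q" for q
  proof -
    have fq: "finite q" using sz QC q by blast
    have "card q = card (q \<inter> X) + card (q - X)"
      using fq by (metis card_Int_Diff finite_Int)
    moreover have "card (X - {f q}) \<le> card (q \<inter> X)"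
      using sub q fq by (intro card_mono) auto
    moreover have "card (X - {f q}) = card Q - 1"
      using cX q finX by (simp add: X_def)
    moreover have "card q \<le> t" using sz QC q by blast
    ultimately show ?thesis by linarith
  qed
  obtain q0 where q0: "q0 \<in> Q" using Qne by blast
  have n1: "card Q \<ge> 1" using Qne finQ by (simp add: Suc_le_eq card_gt_0_iff)
  have nt: "card Q - 1 \<le> t" using cq[OF q0] by linarith
  have "\<Union>Q \<subseteq> X \<union> (\<Union>q\<in>Q. q - X)" by auto
  hence "card (\<Union>Q) \<le> card (X \<union> (\<Union>q\<in>Q. q - X))"
    using finX finQ sz QC by (intro card_mono) auto
  also have "\<dots> \<le> card X + card (\<Union>q\<in>Q. q - X)" by (rule card_Un_le)
  also have "card (\<Union>q\<in>Q. q - X) \<le> (\<Sum>q\<in>Q. card (q - X))" using finQ by (rule card_UN_le)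
  also have "\<dots> \<le> card Q * (t + 1 - card Q)"
    using sum_bounded_above[of Q "\<lambda>q. card (q - X)" "t + 1 - card Q"] cq by fastforce
  finally have "card (\<Union>Q) \<le> card Q + card Q * (t + 1 - card Q)" using cX by simp
  also have "\<dots> = card Q * (t + 2 - card Q)"
  proof -
    have "t + 2 - card Q = Suc (t + 1 - card Q)" using nt n1 by linarith
    thus ?thesis by simp
  qed
  finally show ?thesis using QC Qne Qe by blast
qed

lemma bound_u:
  fixes n t :: nat
  shows "n * (t + 2 - n) \<le> nat \<lfloor>(real t / 2 + 1) ^ 2\<rfloor>"
proof -
  have "real (n * (t + 2 - n)) \<le> (real t / 2 + 1) ^ 2"
  proof (cases "n \<le> t + 2")
    case True
    hence "real (n * (t + 2 - n)) = real n * (real t + 2 - real n)" by (simp add: of_nat_diff)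
    also have "\<dots> \<le> (real t / 2 + 1) ^ 2"
      using sum_squares_ge_zero[of "real t/2 + 1 - real n" 0] by (simp add: power2_eq_square algebra_simps)
    finally show ?thesis .
  next
    case False thus ?thesis by simp
  qed
  hence "int (n * (t + 2 - n)) \<le> \<lfloor>(real t / 2 + 1) ^ 2\<rfloor>"
    by (simp add: le_floor_iff)
  thus ?thesis by linarith
qed


definition Om :: "nat \<Rightarrow> nat \<Rightarrow> nat set set" where
  "Om v w = {A. A \<subseteq> {0..<v} \<and> card A = w}"

definition bad :: "nat \<Rightarrow> nat \<Rightarrow> nat set set \<Rightarrow> bool" where
  "bad u w S \<longleftrightarrow> 1 \<le> card S \<and> card S \<le> u \<and> card (\<Union>S) + w \<le> card S * w"

lemma double_count:
  fixes S :: "nat set set" and T :: "nat set"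
  assumes fS: "finite S" and fB: "\<forall>B\<in>S. finite B \<and> card B = w" and fT: "finite T"
    and TS: "T \<subseteq> \<Union>S" and two: "\<forall>y\<in>T. 2 \<le> card {B\<in>S. y \<in> B}"
  shows "card (\<Union>S) + card T \<le> card S * w"
proof -
  let ?U = "\<Union>S"
  have fU: "finite ?U" using fS fB by auto
  have "(\<Sum>B\<in>S. card {y\<in>?U. y \<in> B}) = (\<Sum>y\<in>?U. card {B\<in>S. y \<in> B})"
    using sum_multicount_gen[of S ?U "\<lambda>B y. y \<in> B" "\<lambda>y. card {B\<in>S. y \<in> B}"] fS fU by blast
  moreover have "(\<Sum>B\<in>S. card {y\<in>?U. y \<in> B}) = card S * w"
  proof -
    have "\<forall>B\<in>S. {y\<in>?U. y \<in> B} = B" by auto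
    hence "(\<Sum>B\<in>S. card {y\<in>?U. y \<in> B}) = (\<Sum>B\<in>S. w)" using fB by (intro sum.cong) auto
    thus ?thesis by simp
  qed
  moreover have "(\<Sum>y\<in>?U. card {B\<in>S. y \<in> B}) \<ge> card ?U + card T"
  proof -
    have "(\<Sum>y\<in>?U. card {B\<in>S. y \<in> B}) = (\<Sum>y\<in>?U - T. card {B\<in>S. y \<in> B}) + (\<Sum>y\<in>T. card {B\<in>S. y \<in> B})"
      using sum.subset_diff[OF TS fU] by blast
    moreover have "(\<Sum>y\<in>T. card {B\<in>S. y \<in> B}) \<ge> (\<Sum>y\<in>T. 2)"
      using two by (intro sum_mono) auto
    moreover have "(\<Sum>y\<in>?U - T. card {B\<in>S. y \<in> B}) \<ge> (\<Sum>y\<in>?U - T. 1)"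
    proof (intro sum_mono)
      fix y assume "y \<in> ?U - T"
      then obtain B where "B \<in> S" "y \<in> B" by auto
      hence "{B\<in>S. y \<in> B} \<noteq> {}" by auto
      moreover have "finite {B\<in>S. y \<in> B}" using fS by simp
      ultimately show "1 \<le> card {B\<in>S. y \<in> B}" by (simp add: Suc_le_eq card_gt_0_iff)
    qed
    moreover have "card (?U - T) = card ?U - card T" using TS fT by (simp add: card_Diff_subset)
    moreover have "card T \<le> card ?U" using TS fU card_mono by blast
    ultimately show ?thesis by simp
  qed
  ultimately show ?thesis by linarith
qed

lemma comb:
  fixes F :: "nat set set"
  assumes F: "F \<subseteq> Om v w" and w: "w \<ge> 1" and T: "T \<subseteq> {0..<v}" "card T = w"
    and ne: "Pt t F T \<noteq> {}" and e: "\<Inter>(Pt t F T) = {}"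
  shows "\<exists>S\<subseteq>F. bad (nat \<lfloor>(real t/2+1)^2\<rfloor>) w S"
proof -
  let ?C = "Pt t F T"
  have "Om v w \<subseteq> Pow {0..<v}" unfolding Om_def by auto
  hence fF: "finite F" using F finite_subset by (metis finite_Pow_iff finite_atLeastLessThan)
  have fC: "finite ?C"
  proof (rule finite_subset[of _ "Pow F"])
    show "?C \<subseteq> Pow F" unfolding Pt_def by auto
  qed (use fF in simp)
  have szC: "\<forall>Q\<in>?C. finite Q \<and> card Q \<le> t"
    unfolding Pt_def using fF finite_subset by auto
  obtain Q where QC: "Q \<subseteq> ?C" and Qne: "Q \<noteq> {}" and Qe: "\<Inter>Q = {}"
    and cU: "card (\<Union>Q) \<le> card Q * (t + 2 - card Q)"
    using min_family[OF fC e szC] by blast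
  define S where "S = \<Union>Q"
  have SF: "S \<subseteq> F" using QC unfolding S_def Pt_def by auto
  have fS: "finite S" using SF fF finite_subset by blast
  have fT: "finite T" using T finite_subset by blast
  have Tne: "T \<noteq> {}" using T w by auto
  have covers: "\<forall>P\<in>Q. T \<subseteq> \<Union>P" using QC unfolding Pt_def by auto
  obtain P0 where P0: "P0 \<in> Q" using Qne by blast
  have TS: "T \<subseteq> \<Union>S" using covers P0 unfolding S_def by blast
  have two: "\<forall>y\<in>T. 2 \<le> card {B\<in>S. y \<in> B}"
  proof
    fix y assume y: "y \<in> T"
    show "2 \<le> card {B\<in>S. y \<in> B}"
    proof (rule ccontr)
      assume "\<not> 2 \<le> card {B\<in>S. y \<in> B}"
      hence le1: "card {B\<in>S. y \<in> B} \<le> 1" by simp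
      obtain B where B: "B \<in> P0" "y \<in> B" using covers P0 y by blast
      have BS: "B \<in> S" using B P0 S_def by blast
      have uniq: "\<forall>B'\<in>S. y \<in> B' \<longrightarrow> B' = B"
      proof (intro ballI impI)
        fix B' assume "B' \<in> S" "y \<in> B'"
        hence "B \<in> {B\<in>S. y \<in> B}" "B' \<in> {B\<in>S. y \<in> B}" using BS B by auto
        moreover have "finite {B\<in>S. y \<in> B}" using fS by simp
        ultimately show "B' = B" using le1 card_le_Suc0_iff_eq by (metis One_nat_def)
      qed
      have "B \<in> \<Inter>Q"
      proof
        fix P assume P: "P \<in> Q"
        then obtain B' where "B' \<in> P" "y \<in> B'" using covers y by blast
        moreover hence "B' \<in> S" using P S_def by blast
        ultimately show "B \<in> P" using uniq by metis
      qed
      thus False using Qe by blast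
    qed
  qed
  have fB: "\<forall>B\<in>S. finite B \<and> card B = w"
  proof
    fix B assume "B \<in> S"
    hence "B \<subseteq> {0..<v} \<and> card B = w" using SF F unfolding Om_def by auto
    thus "finite B \<and> card B = w" using finite_subset by blast
  qed
  have dc: "card (\<Union>S) + w \<le> card S * w"
    using double_count[OF fS fB fT TS two] T by simp
  have cS: "card S \<le> nat \<lfloor>(real t/2+1)^2\<rfloor>"
    using cU bound_u[of "card Q" t] unfolding S_def by linarith
  have "1 \<le> card S"
  proof -
    have "S \<noteq> {}" using TS Tne by auto
    thus ?thesis using fS by (simp add: Suc_le_eq card_gt_0_iff)
  qed
  thus ?thesis using SF dc cS unfolding bad_def by blast
qed

lemma card_small_subsets:
  assumes v: "v \<ge> 1"
  shows "card {U. U \<subseteq> {0..<v::nat} \<and> card U \<le> L} \<le> (L+1) * v^L"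
proof -
  have eq: "{U. U \<subseteq> {0..<v::nat} \<and> card U \<le> L} = (\<Union>k\<in>{..L}. {U. U \<subseteq> {0..<v} \<and> card U = k})" by auto
  have "card (\<Union>k\<in>{..L}. {U. U \<subseteq> {0..<v} \<and> card U = k}) \<le> (\<Sum>k\<in>{..L}. card {U. U \<subseteq> {0..<v} \<and> card U = k})"
    by (rule card_UN_le) simp
  also have "\<dots> = (\<Sum>k\<in>{..L}. v choose k)" by (simp add: n_subsets)
  also have "\<dots> \<le> (\<Sum>k\<in>{..L}. v ^ L)"
  proof (rule sum_mono)
    fix k assume k: "k \<in> {..L}"
    have "v choose k \<le> v ^ k"
      by (cases "k \<le> v") (auto simp: binomial_le_pow binomial_eq_0)
    also have "\<dots> \<le> v ^ L" using k v by (intro power_increasing) auto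
    finally show "v choose k \<le> v ^ L" .
  qed
  also have "\<dots> = (L+1) * v^L" by simp
  finally show ?thesis using eq by simp
qed

lemma count_bad:
  assumes v: "v \<ge> 1"
  shows "card {S. S \<subseteq> Om v w \<and> card S = j \<and> bad u w S}
     \<le> ((j-1)*w+1) * v^((j-1)*w) * 2^(2^((j-1)*w))"
proof -
  define L where "L = (j-1)*w"
  define UU where "UU = {U. U \<subseteq> {0..<v::nat} \<and> card U \<le> L}"
  have fUU: "finite UU" unfolding UU_def
    by (rule finite_subset[of _ "Pow {0..<v}"]) auto
  have sub: "{S. S \<subseteq> Om v w \<and> card S = j \<and> bad u w S} \<subseteq> (\<Union>U\<in>UU. Pow (Pow U))"
  proof
    fix S assume S: "S \<in> {S. S \<subseteq> Om v w \<and> card S = j \<and> bad u w S}"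
    have "card (\<Union>S) + w \<le> j * w" using S unfolding bad_def by auto
    hence "card (\<Union>S) \<le> L" unfolding L_def by (simp add: diff_mult_distrib)
    moreover have "\<Union>S \<subseteq> {0..<v}" using S unfolding Om_def by auto
    ultimately have "\<Union>S \<in> UU" unfolding UU_def by auto
    moreover have "S \<in> Pow (Pow (\<Union>S))" by auto
    ultimately show "S \<in> (\<Union>U\<in>UU. Pow (Pow U))" by blast
  qed
  have fin2: "finite (\<Union>U\<in>UU. Pow (Pow U))"
    using fUU by (auto simp: UU_def intro: finite_subset)
  have "card {S. S \<subseteq> Om v w \<and> card S = j \<and> bad u w S} \<le> card (\<Union>U\<in>UU. Pow (Pow U))"
    using card_mono[OF fin2 sub] .
  also have "\<dots> \<le> (\<Sum>U\<in>UU. card (Pow (Pow U)))" using fUU by (rule card_UN_le)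
  also have "\<dots> \<le> (\<Sum>U\<in>UU. 2^(2^L))"
  proof (rule sum_mono)
    fix U assume U: "U \<in> UU"
    hence fU: "finite U" and cU: "card U \<le> L" unfolding UU_def by (auto intro: finite_subset)
    have "card (Pow (Pow U)) = 2^(2^card U)" using fU by (simp add: card_Pow)
    also have "\<dots> \<le> 2^(2^L)" using cU by (intro power_increasing) auto
    finally show "card (Pow (Pow U)) \<le> 2^(2^L)" .
  qed
  also have "\<dots> = card UU * 2^(2^L)" by simp
  also have "\<dots> \<le> ((L+1) * v^L) * 2^(2^L)"
    using card_small_subsets[OF v, of L] unfolding UU_def by (intro mult_right_mono) auto
  finally show ?thesis unfolding L_def .
qed

lemma supersets:
  assumes fA: "finite A" and SA: "S \<subseteq> A" and Sm: "card S \<le> m"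
  shows "card {F. F \<subseteq> A \<and> card F = m \<and> S \<subseteq> F} = (card A - card S) choose (m - card S)"
proof -
  have fS: "finite S" using fA SA finite_subset by blast
  have "bij_betw (\<lambda>F. F - S) {F. F \<subseteq> A \<and> card F = m \<and> S \<subseteq> F} {G. G \<subseteq> A - S \<and> card G = m - card S}"
  proof (rule bij_betw_byWitness[where f' = "\<lambda>G. G \<union> S"])
    show "\<forall>a\<in>{F. F \<subseteq> A \<and> card F = m \<and> S \<subseteq> F}. a - S \<union> S = a" by auto
    show "\<forall>a\<in>{G. G \<subseteq> A - S \<and> card G = m - card S}. a \<union> S - S = a" by auto
    show "(\<lambda>F. F - S) ` {F. F \<subseteq> A \<and> card F = m \<and> S \<subseteq> F} \<subseteq> {G. G \<subseteq> A - S \<and> card G = m - card S}"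
    proof clarify
      fix F assume "F \<subseteq> A" "S \<subseteq> F" "m = card F"
      moreover hence "finite F" using fA finite_subset by blast
      ultimately show "F - S \<subseteq> A - S \<and> card (F - S) = card F - card S" by (auto simp: card_Diff_subset fS)
    qed
    show "(\<lambda>G. G \<union> S) ` {G. G \<subseteq> A - S \<and> card G = m - card S} \<subseteq> {F. F \<subseteq> A \<and> card F = m \<and> S \<subseteq> F}"
    proof clarify
      fix G assume G: "G \<subseteq> A - S" "card G = m - card S"
      hence "finite G" using fA finite_subset by blast
      moreover have "G \<inter> S = {}" using G by auto
      ultimately have "card (G \<union> S) = card G + card S" using fS card_Un_disjoint by blast
      thus "G \<union> S \<subseteq> A \<and> card (G \<union> S) = m \<and> S \<subseteq> G \<union> S" using G SA Sm by auto
    qed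
  qed
  hence "card {F. F \<subseteq> A \<and> card F = m \<and> S \<subseteq> F} = card {G. G \<subseteq> A - S \<and> card G = m - card S}"
    by (rule bij_betw_same_card)
  also have "\<dots> = card (A - S) choose (m - card S)" using fA by (simp add: n_subsets)
  also have "card (A - S) = card A - card S" using SA fS by (simp add: card_Diff_subset)
  finally show ?thesis .
qed

lemma binom_ratio:
  fixes N m :: nat
  assumes "j \<le> m" "m \<le> N"
  shows "real ((N-j) choose (m-j)) * real N ^ j \<le> real m ^ j * real (N choose m)"
  using assms(1)
proof (induction j)
  case 0 thus ?case by simp
next
  case (Suc j)
  hence jm: "j < m" by simp
  have IH: "real ((N-j) choose (m-j)) * real N ^ j \<le> real m ^ j * real (N choose m)"
    using Suc by simp
  define X where "X = real ((N - Suc j) choose (m - Suc j))"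
  define Y where "Y = real ((N-j) choose (m-j))"
  have "(m-j) * ((N-j) choose (m-j)) = (N-j) * ((N-j-1) choose (m-j-1))"
    using times_binomial_minus1_eq[of "m-j" "N-j"] jm by simp
  moreover have "N-j-1 = N - Suc j" "m-j-1 = m - Suc j" by simp_all
  ultimately have "(m-j) * ((N-j) choose (m-j)) = (N-j) * ((N - Suc j) choose (m - Suc j))" by simp
  hence "real ((m-j) * ((N-j) choose (m-j))) = real ((N-j) * ((N - Suc j) choose (m - Suc j)))" by (rule arg_cong)
  hence id: "real (m-j) * Y = real (N-j) * X" unfolding X_def Y_def by (simp only: of_nat_mult)
  have Nj: "real (N-j) > 0" using jm assms(2) by simp
  have X0: "X \<ge> 0" and Y0: "Y \<ge> 0" unfolding X_def Y_def by auto
  have "real (N-j) * (X * real N) = real (m-j) * Y * real N" using id by (simp add: algebra_simps)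
  also have "\<dots> \<le> real (N-j) * (real m * Y)"
  proof -
    have jj: "real j * real m \<le> real j * real N" using assms(2) by (simp add: mult_left_mono)
    have "real (m-j) = real m - real j" "real (N-j) = real N - real j" using jm assms(2) by (simp_all add: of_nat_diff)
    hence "real (m-j) * real N \<le> real (N-j) * real m" using jj by (simp add: algebra_simps)
    from mult_right_mono[OF this Y0] show ?thesis by (simp add: algebra_simps)
  qed
  finally have XN: "X * real N \<le> real m * Y" using Nj by simp
  have "X * real N ^ Suc j = (X * real N) * real N ^ j" by simp
  also have "\<dots> \<le> (real m * Y) * real N ^ j" using XN by (intro mult_right_mono) auto
  also have "\<dots> = real m * (Y * real N ^ j)" by simp
  also have "\<dots> \<le> real m * (real m ^ j * real (N choose m))" using IH unfolding Y_def
    by (intro mult_left_mono) auto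
  finally show ?case unfolding X_def by simp
qed



lemma finite_Om: "finite (Om v w)"
proof -
  have "Om v w \<subseteq> Pow {0..<v}" unfolding Om_def by auto
  thus ?thesis by (rule finite_subset) simp
qed

lemma no_bad_IPPS:
  assumes F: "F \<subseteq> Om v w" and w: "w \<ge> 1"
    and nb: "\<forall>S\<subseteq>F. \<not> bad (nat \<lfloor>(real t/2+1)^2\<rfloor>) w S"
  shows "IPPS t w v {0..<v} F"
  unfolding IPPS_def set_system_def
proof (intro conjI allI impI)
  show "finite {0..<v}" by simp
  show "card {0..<v} = v" by simp
  show "F \<subseteq> {B. B \<subseteq> {0..<v} \<and> card B = w}" using F unfolding Om_def by simp
  fix T assume T: "T \<subseteq> {0..<v} \<and> card T = w"
  show "Pt t F T = {} \<or> \<Inter> (Pt t F T) \<noteq> {}"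
  proof (rule ccontr)
    assume "\<not> (Pt t F T = {} \<or> \<Inter> (Pt t F T) \<noteq> {})"
    hence "Pt t F T \<noteq> {}" "\<Inter> (Pt t F T) = {}" by auto
    then obtain S where "S \<subseteq> F" "bad (nat \<lfloor>(real t/2+1)^2\<rfloor>) w S"
      using comb[OF F w conjunct1[OF T] conjunct2[OF T]] by blast
    thus False using nb by blast
  qed
qed

lemma deletion:
  assumes fF: "finite F"
  shows "\<exists>F'\<subseteq>F. card F \<le> card F' + card {S. S \<subseteq> F \<and> bad u w S} \<and> (\<forall>S\<subseteq>F'. \<not> bad u w S)"
proof -
  define Bs where "Bs = {S. S \<subseteq> F \<and> bad u w S}"
  define g where "g = (\<lambda>S::nat set set. SOME x. x \<in> S)"
  have gS: "g S \<in> S" if "S \<in> Bs" for S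
  proof -
    have "1 \<le> card S" using that unfolding Bs_def bad_def by auto
    hence "S \<noteq> {}" by auto
    then obtain x where "x \<in> S" by blast
    thus ?thesis unfolding g_def by (rule someI)
  qed
  define F' where "F' = F - g ` Bs"
  have "Bs \<subseteq> Pow F" unfolding Bs_def by auto
  hence fBs: "finite Bs" using fF by (meson finite_Pow_iff finite_subset)
  have "F \<subseteq> F' \<union> g ` Bs" unfolding F'_def by auto
  moreover have "finite (F' \<union> g ` Bs)" using fF fBs unfolding F'_def by simp
  ultimately have "card F \<le> card (F' \<union> g ` Bs)" by (simp add: card_mono)
  also have "\<dots> \<le> card F' + card (g ` Bs)" by (rule card_Un_le)
  also have "card (g ` Bs) \<le> card Bs" using fBs by (rule card_image_le)
  finally have c: "card F \<le> card F' + card Bs" by simp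
  have nb: "\<forall>S\<subseteq>F'. \<not> bad u w S"
  proof (intro allI impI notI)
    fix S assume S: "S \<subseteq> F'" "bad u w S"
    hence "S \<in> Bs" unfolding Bs_def F'_def by auto
    hence "g S \<in> S" "g S \<in> g ` Bs" using gS by auto
    thus False using S unfolding F'_def by auto
  qed
  have "F' \<subseteq> F" unfolding F'_def by auto
  with c nb show ?thesis unfolding Bs_def by blast
qed

lemma averaging:
  fixes m :: nat
  assumes mN: "m \<le> card (Om v w)" and N0: "card (Om v w) > 0"
  shows "\<exists>F. F \<subseteq> Om v w \<and> card F = m \<and>
    real (card {S. S \<subseteq> F \<and> bad u w S}) \<le>
      (\<Sum>S\<in>{S. S \<subseteq> Om v w \<and> bad u w S}. (real m / real (card (Om v w))) ^ card S)"
proof -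
  define O' where "O' = Om v w"
  define N where "N = card O'"
  define FF where "FF = {F. F \<subseteq> O' \<and> card F = m}"
  define Bad where "Bad = {S. S \<subseteq> O' \<and> bad u w S}"
  define E where "E = (\<Sum>S\<in>Bad. (real m / real N) ^ card S)"
  have fO: "finite O'" unfolding O'_def by (rule finite_Om)
  have "FF \<subseteq> Pow O'" unfolding FF_def by auto
  hence fFF: "finite FF" using fO by (meson finite_Pow_iff finite_subset)
  have "Bad \<subseteq> Pow O'" unfolding Bad_def by auto
  hence fBad: "finite Bad" using fO by (meson finite_Pow_iff finite_subset)
  have cFF: "card FF = N choose m" unfolding FF_def N_def using fO by (simp add: n_subsets)
  have mN': "m \<le> N" using mN unfolding N_def O'_def .
  have Npos: "real N > 0" using N0 unfolding N_def O'_def by simp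
  have FFpos: "card FF > 0" using cFF mN' by simp
  have swap: "(\<Sum>F\<in>FF. card {S\<in>Bad. S \<subseteq> F}) = (\<Sum>S\<in>Bad. card {F\<in>FF. S \<subseteq> F})"
    by (rule sum_multicount_gen) (use fFF fBad in auto)
  have each: "real (card {F\<in>FF. S \<subseteq> F}) \<le> (real m / real N) ^ card S * real (card FF)" if S: "S \<in> Bad" for S
  proof (cases "card S \<le> m")
    case True
    have SO: "S \<subseteq> O'" using S unfolding Bad_def by auto
    have "{F\<in>FF. S \<subseteq> F} = {F. F \<subseteq> O' \<and> card F = m \<and> S \<subseteq> F}" unfolding FF_def by auto
    hence eq: "card {F\<in>FF. S \<subseteq> F} = (N - card S) choose (m - card S)"
      using supersets[OF fO SO True] unfolding N_def by simp
    have "real ((N - card S) choose (m - card S)) * real N ^ card S \<le> real m ^ card S * real (N choose m)"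
      by (rule binom_ratio[OF True mN'])
    hence "real ((N - card S) choose (m - card S)) \<le> real m ^ card S * real (N choose m) / real N ^ card S"
      using Npos by (simp add: pos_le_divide_eq)
    thus ?thesis using eq cFF by (simp add: power_divide)
  next
    case False
    have "{F\<in>FF. S \<subseteq> F} = {}"
    proof (rule ccontr)
      assume "{F\<in>FF. S \<subseteq> F} \<noteq> {}"
      then obtain F where "F \<in> FF" "S \<subseteq> F" by blast
      hence "F \<subseteq> O'" "card F = m" "S \<subseteq> F" unfolding FF_def by auto
      hence "card S \<le> m" using fO card_mono finite_subset by metis
      thus False using False by simp
    qed
    hence "real (card {F\<in>FF. S \<subseteq> F}) = 0" by (simp only: card.empty of_nat_0)
    moreover have "0 \<le> (real m / real N) ^ card S * real (card FF)" by simp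
    ultimately show ?thesis by linarith
  qed
  have "real (\<Sum>F\<in>FF. card {S\<in>Bad. S \<subseteq> F}) = (\<Sum>S\<in>Bad. real (card {F\<in>FF. S \<subseteq> F}))"
    using swap by (simp add: of_nat_sum)
  also have "\<dots> \<le> (\<Sum>S\<in>Bad. (real m / real N) ^ card S * real (card FF))"
    using each by (intro sum_mono) auto
  also have "\<dots> = real (card FF) * E" unfolding E_def by (simp add: sum_distrib_left mult.commute)
  finally have tot: "(\<Sum>F\<in>FF. real (card {S\<in>Bad. S \<subseteq> F})) \<le> real (card FF) * E" by (simp add: of_nat_sum)
  have "\<exists>F\<in>FF. real (card {S\<in>Bad. S \<subseteq> F}) \<le> E"
  proof (rule ccontr)
    assume "\<not> (\<exists>F\<in>FF. real (card {S\<in>Bad. S \<subseteq> F}) \<le> E)"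
    hence lt: "\<forall>F\<in>FF. E < real (card {S\<in>Bad. S \<subseteq> F})" by auto
    have "FF \<noteq> {}" using FFpos by auto
    hence "(\<Sum>F\<in>FF. E) < (\<Sum>F\<in>FF. real (card {S\<in>Bad. S \<subseteq> F}))"
      using fFF lt by (intro sum_strict_mono) auto
    thus False using tot by simp
  qed
  then obtain F where F: "F \<in> FF" and bF: "real (card {S\<in>Bad. S \<subseteq> F}) \<le> E" by blast
  have "{S\<in>Bad. S \<subseteq> F} = {S. S \<subseteq> F \<and> bad u w S}" using F unfolding FF_def Bad_def by auto
  hence "real (card {S. S \<subseteq> F \<and> bad u w S}) \<le> E" using bF by simp
  moreover have "F \<subseteq> Om v w" "card F = m" using F unfolding FF_def O'_def by auto
  ultimately show ?thesis unfolding E_def Bad_def N_def O'_def by blast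
qed



lemma term_bound:
  fixes b m N v w j r :: nat and C0 W \<epsilon> :: real
  assumes b: "real b \<le> C0 * real v ^ ((j-1)*w)" and C0: "C0 \<ge> 0"
    and vN: "real v ^ w \<le> real w ^ w * real N"
    and j1: "1 \<le> j" and jr: "j \<le> r + 1" and m1: "1 \<le> m"
    and mr: "real m ^ r \<le> \<epsilon> * real N" and N0: "N > 0" and w1: "w \<ge> 1"
    and W: "W = (real w ^ w) ^ r"
  shows "real b * (real m / real N) ^ j \<le> C0 * W * \<epsilon> * real m"
proof -
  obtain k where jk: "j = Suc k" using j1 by (cases j) auto
  have kr: "k \<le> r" using jr jk by simp
  have Np: "real N > 0" using N0 by simp
  have ww: "real w ^ w \<ge> 1" using w1 by simp
  have "real v ^ ((j-1)*w) = (real v ^ w) ^ k" using jk by (simp add: power_mult[symmetric] mult.commute)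
  also have "\<dots> \<le> (real w ^ w * real N) ^ k" using vN by (intro power_mono) auto
  also have "\<dots> = (real w ^ w) ^ k * real N ^ k" by (simp add: power_mult_distrib)
  also have "\<dots> \<le> W * real N ^ k" unfolding W using ww kr
    by (intro mult_right_mono power_increasing) auto
  finally have v1: "real v ^ ((j-1)*w) \<le> W * real N ^ k" .
  have b2: "real b \<le> C0 * (W * real N ^ k)" using b v1 C0 by (meson mult_left_mono order_trans)
  have "real b * (real m / real N) ^ j = real b * (real m ^ Suc k / real N ^ Suc k)"
    using jk by (simp add: power_divide)
  also have "\<dots> \<le> C0 * (W * real N ^ k) * (real m ^ Suc k / real N ^ Suc k)"
    using b2 by (intro mult_right_mono) auto
  also have "\<dots> = C0 * W * real m * (real m ^ k / real N)"
    using Np by (simp add: field_simps)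
  also have "\<dots> \<le> C0 * W * real m * \<epsilon>"
  proof (intro mult_left_mono)
    have "real m ^ k \<le> real m ^ r" using m1 kr by (intro power_increasing) auto
    also have "\<dots> \<le> \<epsilon> * real N" by (rule mr)
    finally show "real m ^ k / real N \<le> \<epsilon>" using Np by (simp add: divide_le_eq)
    show "0 \<le> C0 * W * real m" using C0 ww unfolding W by simp
  qed
  finally show ?thesis by (simp add: mult_ac)
qed


theorem theorem1:
  fixes w t :: nat
  assumes "w \<ge> 1" and "t \<ge> 2"
  defines "u \<equiv> nat \<lfloor>(real t / 2 + 1) ^ 2\<rfloor>"
  shows "\<exists>c::real. c > 0 \<and> (\<exists>N::nat. \<forall>v\<ge>N.
           \<exists>\<B>::nat set set. IPPS t w v {0..<v} \<B> \<and>
             real (card \<B>) \<ge> c * real v powr (real w / (real u - 1)))"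
proof -
  have w1: "w \<ge> 1" and t2: "t \<ge> 2" using assms by auto
  define r where "r = u - 1"
  have "(2::real) \<le> real t / 2 + 1" using t2 by simp
  hence "(2::real)^2 \<le> (real t / 2 + 1)^2" by (intro power_mono) auto
  hence "4 \<le> \<lfloor>(real t / 2 + 1) ^ 2\<rfloor>" by (simp add: le_floor_iff)
  hence u4: "u \<ge> 4" unfolding u_def by linarith
  have r3: "r \<ge> 3" using u4 r_def by simp
  have ru: "real u - 1 = real r" using u4 r_def by (simp add: of_nat_diff)
  have rpos: "real r > 0" using r3 by simp
  define R where "R = r * w"
  define C0 :: real where "C0 = real ((R+1) * 2^(2^R))"
  define W :: real where "W = (real w ^ w) ^ r"
  have "0 < (R+1) * (2::nat)^(2^R)" by simp
  hence C01': "1 \<le> (R+1) * (2::nat)^(2^R)" by linarith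
  have C01: "C0 \<ge> 1" unfolding C0_def using C01' by (metis of_nat_1 of_nat_le_iff)
  have W1: "W \<ge> 1" unfolding W_def using w1 by simp
  have upos: "real u \<ge> 1" using u4 by simp
  define D where "D = 2 * real u * C0 * W"
  have den: "D \<ge> 1"
  proof -
    have uc: "1 \<le> real u * C0" using mult_mono[OF upos C01] by simp
    have uc0: "0 \<le> real u * C0" using uc by linarith
    have "1 \<le> real u * C0 * W" using mult_mono[OF uc W1 uc0] by simp
    thus ?thesis unfolding D_def by simp
  qed
  define \<epsilon> :: real where "\<epsilon> = 1 / D"
  have ep: "\<epsilon> > 0" unfolding \<epsilon>_def using den by simp
  have e1: "\<epsilon> \<le> 1" unfolding \<epsilon>_def using den by simp
  have epsdef: "real u * (C0 * W * \<epsilon>) = 1/2"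
  proof -
    have "D \<noteq> 0" using den by simp
    thus ?thesis unfolding \<epsilon>_def D_def by (simp add: field_simps)
  qed
  define a where "a = \<epsilon> powr (1 / real r) / real w powr (real w / real r)"
  have apos: "a > 0" unfolding a_def using ep w1 by simp
  define N0 where "N0 = w + nat \<lceil>(2/a) powr (real r / real w)\<rceil> + 1"
  show ?thesis
  proof (intro exI[of _ "a/4"] conjI exI[of _ N0] allI impI)
    show "a/4 > 0" using apos by simp
    fix v assume v: "v \<ge> N0"
    have vw: "w \<le> v" and v1: "1 \<le> v" using v unfolding N0_def by auto
    have v2: "real v \<ge> (2/a) powr (real r / real w)"
    proof -
      have "(2/a) powr (real r / real w) \<le> real (nat \<lceil>(2/a) powr (real r / real w)\<rceil>)" by linarith
      also have "\<dots> \<le> real v" using v unfolding N0_def by simp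
      finally show ?thesis .
    qed
    define N where "N = card (Om v w)"
    have NN: "N = v choose w" unfolding Om_def N_def by (simp add: n_subsets)
    have Npos: "N > 0" using vw NN by simp
    have binb: "(real v / real w)^w \<le> real N" unfolding NN by (rule binomial_ge_n_over_k_pow_k[OF vw])
    have vN: "real v ^ w \<le> real w ^ w * real N"
    proof -
      have "(real v / real w)^w = real v ^ w / real w ^ w" by (simp add: power_divide)
      thus ?thesis using binb w1 by (simp add: divide_le_eq mult.commute)
    qed
    define M where "M = (\<epsilon> * real N) powr (1 / real r)"
    have eN: "\<epsilon> * real N > 0" using ep Npos by simp
    have Mbig: "M \<ge> a * real v powr (real w / real r)"
    proof -
      have vwpos: "real v / real w > 0" using v1 w1 by simp
      have "(\<epsilon> * (real v / real w)^w) powr (1/real r) \<le> M"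
        unfolding M_def using binb ep rpos by (intro powr_mono2) auto
      moreover have "(\<epsilon> * (real v / real w)^w) powr (1/real r) = \<epsilon> powr (1/real r) * ((real v / real w)^w) powr (1/real r)"
        using ep vwpos by (simp add: powr_mult)
      moreover have "((real v / real w)^w) powr (1/real r) = (real v / real w) powr (real w / real r)"
      proof -
        have "(real v / real w)^w = (real v / real w) powr (real w)" using vwpos by (simp add: powr_realpow)
        thus ?thesis by (simp add: powr_powr)
      qed
      moreover have "(real v / real w) powr (real w / real r) = real v powr (real w / real r) / real w powr (real w / real r)"
        by (rule powr_divide)
      ultimately show ?thesis unfolding a_def by simp
    qed
    have vbig: "real v powr (real w / real r) \<ge> 2/a"
    proof -
      have "2/a = ((2/a) powr (real r / real w)) powr (real w / real r)"
        using apos rpos w1 by (simp add: powr_powr)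
      also have "\<dots> \<le> real v powr (real w / real r)"
        using v2 rpos by (intro powr_mono2) auto
      finally show ?thesis .
    qed
    have M2: "M \<ge> 2"
    proof -
      have "a * (2/a) \<le> a * real v powr (real w / real r)" using vbig apos by (intro mult_left_mono) auto
      thus ?thesis using Mbig apos by simp
    qed
    define m where "m = nat \<lfloor>M\<rfloor>"
    have mM: "real m \<le> M" "real m \<ge> M - 1" unfolding m_def using M2 by linarith+
    have m1: "m \<ge> 1" using mM M2 by linarith
    have Mr: "M ^ r = \<epsilon> * real N"
    proof -
      have "M ^ r = M powr (real r)" using M2 by (simp add: powr_realpow)
      also have "\<dots> = \<epsilon> * real N" unfolding M_def using rpos eN by (simp add: powr_powr)
      finally show ?thesis .
    qed
    have mr: "real m ^ r \<le> \<epsilon> * real N"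
      using power_mono[OF mM(1), of r] Mr by simp
    have mN: "m \<le> N"
    proof -
      have "M ^ 1 \<le> M ^ r" using M2 r3 by (intro power_increasing) auto
      hence "M \<le> M ^ r" by simp
      hence "real m \<le> \<epsilon> * real N" using mM Mr by linarith
      also have "\<dots> \<le> real N" using e1 Npos by simp
      finally show ?thesis by simp
    qed
    obtain F where F: "F \<subseteq> Om v w" "card F = m"
      and bF: "real (card {S. S \<subseteq> F \<and> bad u w S}) \<le>
        (\<Sum>S\<in>{S. S \<subseteq> Om v w \<and> bad u w S}. (real m / real N) ^ card S)"
      using averaging[of m v w u] mN Npos unfolding N_def by blast
    define Bad where "Bad = {S. S \<subseteq> Om v w \<and> bad u w S}"
    have fBad: "finite Bad"
    proof -
      have "Bad \<subseteq> Pow (Om v w)" unfolding Bad_def by auto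
      thus ?thesis using finite_Om by (meson finite_Pow_iff finite_subset)
    qed
    have cardB: "card ` Bad \<subseteq> {1..u}" unfolding Bad_def bad_def by auto
    have E: "(\<Sum>S\<in>Bad. (real m / real N) ^ card S) \<le> real m / 2"
    proof -
      have "(\<Sum>S\<in>Bad. (real m / real N) ^ card S) =
          (\<Sum>j\<in>{1..u}. (\<Sum>S\<in>{S\<in>Bad. card S = j}. (real m / real N) ^ card S))"
        using sum.group[OF fBad _ cardB, of "\<lambda>S. (real m / real N) ^ card S"] by simp
      also have "\<dots> = (\<Sum>j\<in>{1..u}. real (card {S. S \<subseteq> Om v w \<and> card S = j \<and> bad u w S}) * (real m / real N) ^ j)"
      proof (rule sum.cong[OF refl])
        fix j assume j: "j \<in> {1..u}"
        have seq: "{S\<in>Bad. card S = j} = {S. S \<subseteq> Om v w \<and> card S = j \<and> bad u w S}" unfolding Bad_def by auto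
        have "(\<Sum>S\<in>{S\<in>Bad. card S = j}. (real m / real N) ^ card S) = (\<Sum>S\<in>{S\<in>Bad. card S = j}. (real m / real N) ^ j)"
          by (rule sum.cong) auto
        also have "\<dots> = real (card {S\<in>Bad. card S = j}) * (real m / real N) ^ j" by simp
        finally show "(\<Sum>S\<in>{S\<in>Bad. card S = j}. (real m / real N) ^ card S) = real (card {S. S \<subseteq> Om v w \<and> card S = j \<and> bad u w S}) * (real m / real N) ^ j"
          unfolding seq .
      qed
      also have "\<dots> \<le> (\<Sum>j\<in>{1..u}. C0 * W * \<epsilon> * real m)"
      proof (rule sum_mono)
        fix j assume j: "j \<in> {1..u}"
        have "j - 1 \<le> r" unfolding r_def using j by (simp add: diff_le_mono)
        hence jR: "(j-1)*w \<le> R" unfolding R_def by (rule mult_le_mono1)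
        have "card {S. S \<subseteq> Om v w \<and> card S = j \<and> bad u w S} \<le> ((j-1)*w+1) * v^((j-1)*w) * 2^(2^((j-1)*w))"
          by (rule count_bad[OF v1])
        also have "\<dots> \<le> (R+1) * v^((j-1)*w) * 2^(2^R)"
          using jR v1 by (intro mult_mono power_increasing) auto
        finally have "real (card {S. S \<subseteq> Om v w \<and> card S = j \<and> bad u w S}) \<le> real ((R+1) * v^((j-1)*w) * 2^(2^R))"
          by (simp only: of_nat_le_iff)
        hence b: "real (card {S. S \<subseteq> Om v w \<and> card S = j \<and> bad u w S}) \<le> C0 * real v ^ ((j-1)*w)"
          unfolding C0_def by (simp add: algebra_simps)
        show "real (card {S. S \<subseteq> Om v w \<and> card S = j \<and> bad u w S}) * (real m / real N) ^ j \<le> C0 * W * \<epsilon> * real m"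
        proof (rule term_bound[OF b _ vN _ _ m1 mr Npos w1 W_def])
          show "0 \<le> C0" using C01 by simp
          show "1 \<le> j" using j by simp
          show "j \<le> r + 1" using j unfolding r_def by simp
        qed
      qed
      also have "\<dots> = real u * (C0 * W * \<epsilon>) * real m" by simp
      also have "\<dots> = real m / 2" using epsdef by simp
      finally show ?thesis .
    qed
    have fF: "finite F" using F(1) finite_Om by (rule finite_subset)
    obtain F' where F'F: "F' \<subseteq> F" and cF': "card F \<le> card F' + card {S. S \<subseteq> F \<and> bad u w S}"
      and nb: "\<forall>S\<subseteq>F'. \<not> bad u w S"
      using deletion[OF fF, of u w] by blast
    have F'O: "F' \<subseteq> Om v w" using F'F F by auto
    have ipps: "IPPS t w v {0..<v} F'"
      using no_bad_IPPS[OF F'O w1] nb unfolding u_def by blast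
    have "real m \<le> real (card F') + real m / 2" using cF' F bF E unfolding Bad_def by linarith
    hence "real (card F') \<ge> real m / 2" by simp
    moreover have "real m / 2 \<ge> M / 4" using mM M2 by linarith
    moreover have "M / 4 \<ge> a / 4 * real v powr (real w / real r)" using Mbig by simp
    ultimately have "real (card F') \<ge> a / 4 * real v powr (real w / (real u - 1))" using ru by simp
    thus "\<exists>\<B>::nat set set. IPPS t w v {0..<v} \<B> \<and> real (card \<B>) \<ge> a / 4 * real v powr (real w / (real u - 1))"
      using ipps by blast
  qed
qed

end
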